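(* Let $0\le h\le q-2$ and $\lambda_0,\lambda_1\in\mathbb{F}^\times$. For any $y\in A_\infty'$ with $|y|<p^{-h}$, the equation $\big(\mathrm{id}-\lambda_0\lambda_1^{-1}T_{K,0}^{-(q-1)h}\varphi_q\big)(x)=y$ has a unique solution $x\in A_\infty'$ with $|x|<p^{-h}$, given by the convergent series $x=\sum_{n\ge0}\big(\lambda_0\lambda_1^{-1}T_{K,0}^{-(q-1)h}\varphi_q\big)^n(y)$.
   Context: $p$ odd prime, $q=p^f$, $\mathbb{F}$ a finite extension of $\mathbb{F}_p$. Let $A_\infty'=\mathbb{F}((T_{K,0}^{1/p^\infty}))\big\langle\big(T_{K,i}/T_{K,0}^{p^i}\big)^{\pm1/p^\infty},1\le i\le f-1\big\rangle$ (the completed perfect ring obtained from $\mathbb{F}((T_{K,0}))\langle (T_{K,i}/T_{K,0}^{p^i})^{\pm1},1\le i\le f-1\rangle$ with its $T_{K,0}$-adic topology). Let $\varphi$ be the continuous $\mathbb{F}$-linear endomorphism of $A_\infty'$ with $\varphi(T_{K,i})=T_{K,i+1}$ for $0\le i\le f-1$, where $T_{K,f}:=T_{K,0}^q$ (compatibly on $p$-power roots), and $\varphi_q=\varphi^f$. Let $|\cdot|$ be the unique multiplicative norm on $A_\infty'$ inducing its topology with $|T_{K,0}|=p^{-1}$. *)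

theory Defs
  imports Complex_Main "HOL-Computational_Algebra.Primes"
begin

text \<open>
Elements of A'_infty are represented as coefficient functions
x :: (nat => rat) => 'a on exponent vectors e, where e 0 is the exponent of T_{K,0}
and, for 1 <= i <= f-1, e i is the exponent of X_i = T_{K,i} / T_{K,0}^(p^i).  The completed perfect ring is
the set of such functions with, for every bound N, only finitely many nonzero
coefficients whose T_{K,0}-exponent is below N.
\<close>

definition zp_inv :: "nat \<Rightarrow> rat set" where
  "zp_inv p = {r. \<exists>m::int. \<exists>k::nat. r = of_int m / of_nat p ^ k}"

definition valid_exp :: "nat \<Rightarrow> nat \<Rightarrow> (nat \<Rightarrow> rat) \<Rightarrow> bool" where
  "valid_exp p f e \<longleftrightarrow> (\<forall>i\<ge>f. e i = 0) \<and> (\<forall>i<f. e i \<in> zp_inv p)"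

definition Ainf :: "nat \<Rightarrow> nat \<Rightarrow> ((nat \<Rightarrow> rat) \<Rightarrow> 'a::field) set" where
  "Ainf p f = {x. (\<forall>e. x e \<noteq> 0 \<longrightarrow> valid_exp p f e)
                 \<and> (\<forall>N::rat. finite {e. x e \<noteq> 0 \<and> e 0 < N})}"

definition azero :: "(nat \<Rightarrow> rat) \<Rightarrow> 'a::field" where
  "azero = (\<lambda>e. 0)"

definition asub :: "((nat \<Rightarrow> rat) \<Rightarrow> 'a::field) \<Rightarrow> ((nat \<Rightarrow> rat) \<Rightarrow> 'a) \<Rightarrow> ((nat \<Rightarrow> rat) \<Rightarrow> 'a)" where
  "asub x y = (\<lambda>e. x e - y e)"

definition asmult :: "'a::field \<Rightarrow> ((nat \<Rightarrow> rat) \<Rightarrow> 'a) \<Rightarrow> ((nat \<Rightarrow> rat) \<Rightarrow> 'a)" where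
  "asmult c x = (\<lambda>e. c * x e)"

definition amult :: "((nat \<Rightarrow> rat) \<Rightarrow> 'a::field) \<Rightarrow> ((nat \<Rightarrow> rat) \<Rightarrow> 'a) \<Rightarrow> ((nat \<Rightarrow> rat) \<Rightarrow> 'a)" where
  "amult x y = (\<lambda>e. \<Sum>e1\<in>{e1. x e1 \<noteq> 0 \<and> y (\<lambda>i. e i - e1 i) \<noteq> 0}. x e1 * y (\<lambda>i. e i - e1 i))"

definition aT0pow :: "rat \<Rightarrow> ((nat \<Rightarrow> rat) \<Rightarrow> 'a::field)" where
  "aT0pow k = (\<lambda>e. if e = (\<lambda>i. if i = 0 then k else 0) then 1 else 0)"

definition apsum :: "(nat \<Rightarrow> ((nat \<Rightarrow> rat) \<Rightarrow> 'a::field)) \<Rightarrow> nat \<Rightarrow> ((nat \<Rightarrow> rat) \<Rightarrow> 'a)" where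
  "apsum s N = (\<lambda>e. \<Sum>n<N. s n e)"

definition anorm :: "nat \<Rightarrow> ((nat \<Rightarrow> rat) \<Rightarrow> 'a::field) \<Rightarrow> real" where
  "anorm p x = (if x = (\<lambda>e. 0) then 0
     else Sup {real p powr (- real_of_rat (e 0)) | e. x e \<noteq> 0})"

text \<open>On monomials,
  phi(T_0) = T_1 = X_1 T_0^p, phi(X_i) = X_{i+1} X_1^(-p^i) (1 <= i <= f-2),
  phi(X_{f-1}) = T_0^q / T_1^(p^(f-1)) = X_1^(-p^(f-1)),
so phi acts on exponent vectors by the following (bijective) linear map.\<close>
definition phi_exp :: "nat \<Rightarrow> nat \<Rightarrow> (nat \<Rightarrow> rat) \<Rightarrow> (nat \<Rightarrow> rat)" where
  "phi_exp p f e = (\<lambda>j. if j = 0 then of_nat p * e 0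
      else if j = 1 \<and> 2 \<le> f then e 0 - (\<Sum>i\<in>{1..<f}. of_nat p ^ i * e i)
      else if 2 \<le> j \<and> j < f then e (j - 1)
      else 0)"

definition aphi :: "nat \<Rightarrow> nat \<Rightarrow> ((nat \<Rightarrow> rat) \<Rightarrow> 'a::field) \<Rightarrow> ((nat \<Rightarrow> rat) \<Rightarrow> 'a)" where
  "aphi p f x = (\<lambda>e'. \<Sum>e\<in>{e. x e \<noteq> 0 \<and> phi_exp p f e = e'}. x e)"

definition aphiq :: "nat \<Rightarrow> nat \<Rightarrow> ((nat \<Rightarrow> rat) \<Rightarrow> 'a::field) \<Rightarrow> ((nat \<Rightarrow> rat) \<Rightarrow> 'a)" where
  "aphiq p f = (aphi p f ^^ f)"

definition Lop :: "nat \<Rightarrow> nat \<Rightarrow> nat \<Rightarrow> 'a::field \<Rightarrow> ((nat \<Rightarrow> rat) \<Rightarrow> 'a) \<Rightarrow> ((nat \<Rightarrow> rat) \<Rightarrow> 'a)" where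
  "Lop p f h c x = asmult c (amult (aT0pow (- of_nat ((p ^ f - 1) * h))) (aphiq p f x))"

end

theory Submission imports Defs begin

lemma zp_inv_add: assumes "0 < p" "a \<in> zp_inv p" "b \<in> zp_inv p" shows "a + b \<in> zp_inv p"
proof -
  from assms(2) obtain m k where a: "a = of_int m / of_nat p ^ k" unfolding zp_inv_def by auto
  from assms(3) obtain m' k' where b: "b = of_int m' / of_nat p ^ k'" unfolding zp_inv_def by auto
  have "a + b = of_int (m * int p ^ k' + m' * int p ^ k) / of_nat p ^ (k + k')"
    using assms(1) by (simp add: a b field_simps power_add)
  then show ?thesis unfolding zp_inv_def by blast
qed

lemma zp_inv_neg: assumes "a \<in> zp_inv p" shows "- a \<in> zp_inv p"
proof -
  from assms obtain m k where a: "a = of_int m / of_nat p ^ k" unfolding zp_inv_def by auto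
  have "- a = of_int (- m) / of_nat p ^ k" by (simp add: a)
  then show ?thesis unfolding zp_inv_def by blast
qed

lemma zp_inv_diff: assumes "0 < p" "a \<in> zp_inv p" "b \<in> zp_inv p" shows "a - b \<in> zp_inv p"
  using zp_inv_add[OF assms(1,2) zp_inv_neg[OF assms(3)]] by simp

lemma zp_inv_int: "of_int m \<in> zp_inv p"
  unfolding zp_inv_def by (rule CollectI, rule exI[of _ m], rule exI[of _ 0]) simp

lemma zp_inv_nat: "of_nat m \<in> zp_inv p"
  using zp_inv_int[of "int m" p] by simp

lemma zp_inv_mult_nat: assumes "a \<in> zp_inv p" shows "of_nat c * a \<in> zp_inv p"
proof -
  from assms obtain m k where a: "a = of_int m / of_nat p ^ k" unfolding zp_inv_def by auto
  have "of_nat c * a = of_int (int c * m) / of_nat p ^ k" by (simp add: a)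
  then show ?thesis unfolding zp_inv_def by blast
qed

lemma zp_inv_sum: assumes "0 < p" "\<forall>i\<in>A. g i \<in> zp_inv p" shows "sum g A \<in> zp_inv p"
  using assms(2)
proof (induct A rule: infinite_finite_induct)
  case (infinite A) then show ?case using zp_inv_nat[of 0 p] by simp
next
  case empty then show ?case using zp_inv_nat[of 0 p] by simp
next
  case (insert x F) then show ?case using zp_inv_add[OF assms(1)] by simp
qed

lemma valid_phi: assumes "0 < p" "1 \<le> f" "valid_exp p f e" shows "valid_exp p f (phi_exp p f e)"
proof -
  have z: "\<forall>i<f. e i \<in> zp_inv p" using assms(3) by (simp add: valid_exp_def)
  have e0: "e 0 \<in> zp_inv p" using z assms(2) by auto
  have s: "(\<Sum>i\<in>{1..<f}. of_nat p ^ i * e i) \<in> zp_inv p"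
    using z by (intro zp_inv_sum[OF assms(1)]) (metis atLeastLessThan_iff of_nat_power zp_inv_mult_nat)
  show ?thesis unfolding valid_exp_def
  proof (intro conjI allI impI)
    fix i assume "f \<le> i" then show "phi_exp p f e i = 0" using assms(2) by (auto simp: phi_exp_def)
  next
    fix i assume i: "i < f"
    show "phi_exp p f e i \<in> zp_inv p"
      using i z e0 s zp_inv_diff[OF assms(1) e0 s] zp_inv_mult_nat[OF e0, of p] zp_inv_nat[of 0 p]
      by (auto simp: phi_exp_def)
  qed
qed

lemma Ainf_supp:
  assumes "x \<in> Ainf p f" "z \<in> Ainf p f" "\<forall>e. w e \<noteq> 0 \<longrightarrow> x e \<noteq> 0 \<or> z e \<noteq> 0"
  shows "w \<in> Ainf p f"
  unfolding Ainf_def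
proof (intro CollectI conjI allI impI)
  fix e assume "w e \<noteq> 0" then show "valid_exp p f e" using assms unfolding Ainf_def by blast
next
  fix N :: rat
  have "{e. w e \<noteq> 0 \<and> e 0 < N} \<subseteq> {e. x e \<noteq> 0 \<and> e 0 < N} \<union> {e. z e \<noteq> 0 \<and> e 0 < N}"
    using assms(3) by blast
  moreover have "finite ({e. x e \<noteq> 0 \<and> e 0 < N} \<union> {e. z e \<noteq> 0 \<and> e 0 < N})"
    using assms(1,2) unfolding Ainf_def by blast
  ultimately show "finite {e. w e \<noteq> 0 \<and> e 0 < N}" by (rule finite_subset)
qed

lemma Ainf_fin: "x \<in> Ainf p f \<Longrightarrow> finite {e. x e \<noteq> 0 \<and> e 0 < N}"
  unfolding Ainf_def by blast

lemma Ainf_valid: "x \<in> Ainf p f \<Longrightarrow> x e \<noteq> 0 \<Longrightarrow> valid_exp p f e"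
  unfolding Ainf_def by blast

lemma zero_Ainf: "(\<lambda>e. 0) \<in> Ainf p f"
  unfolding Ainf_def by simp


lemma phi_exp_0: "phi_exp p f e 0 = of_nat p * e 0"
  by (simp add: phi_exp_def)

lemma aphi_eq:
  assumes "finite G" "{e. x e \<noteq> 0 \<and> phi_exp p f e = e'} \<subseteq> G" "G \<subseteq> {e. phi_exp p f e = e'}"
  shows "aphi p f x e' = sum x G"
  unfolding aphi_def
  by (rule sum.mono_neutral_left[OF assms(1,2)]) (use assms(3) in auto)

lemma pre_fin:
  assumes "x \<in> Ainf p f" "z \<in> Ainf p f" "0 < p"
  shows "finite {e. (x e \<noteq> 0 \<or> z e \<noteq> 0) \<and> phi_exp p f e = e'}"
proof -
  have "{e. (x e \<noteq> 0 \<or> z e \<noteq> 0) \<and> phi_exp p f e = e'} \<subseteq>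
        {e. x e \<noteq> 0 \<and> e 0 < e' 0 / of_nat p + 1} \<union> {e. z e \<noteq> 0 \<and> e 0 < e' 0 / of_nat p + 1}"
    using assms(3) by (auto simp: phi_exp_0)
  then show ?thesis using Ainf_fin[OF assms(1)] Ainf_fin[OF assms(2)]
    by (meson finite_UnI finite_subset)
qed

lemma aphi_lin:
  assumes "x \<in> Ainf p f" "z \<in> Ainf p f" "0 < p"
  shows "aphi p f (\<lambda>e. a * x e + b * z e) = (\<lambda>e'. a * aphi p f x e' + b * aphi p f z e')"
proof
  fix e'
  define G where "G = {e. (x e \<noteq> 0 \<or> z e \<noteq> 0) \<and> phi_exp p f e = e'}"
  have G: "finite G" using pre_fin[OF assms] G_def by simp
  have 1: "aphi p f x e' = sum x G" by (rule aphi_eq[OF G]) (auto simp: G_def)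
  have 2: "aphi p f z e' = sum z G" by (rule aphi_eq[OF G]) (auto simp: G_def)
  have 3: "aphi p f (\<lambda>e. a * x e + b * z e) e' = (\<Sum>e\<in>G. a * x e + b * z e)"
    by (rule aphi_eq[OF G]) (auto simp: G_def)
  show "aphi p f (\<lambda>e. a * x e + b * z e) e' = a * aphi p f x e' + b * aphi p f z e'"
    unfolding 1 2 3 by (simp add: sum.distrib sum_distrib_left)
qed

lemma aphi_nz: "aphi p f x e' \<noteq> 0 \<Longrightarrow> \<exists>e. x e \<noteq> 0 \<and> phi_exp p f e = e'"
proof -
  assume "aphi p f x e' \<noteq> 0"
  then obtain e where "e \<in> {e. x e \<noteq> 0 \<and> phi_exp p f e = e'}" "x e \<noteq> 0"
    unfolding aphi_def by (meson sum.not_neutral_contains_not_neutral)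
  then show ?thesis by blast
qed

lemma aphi_Ainf:
  assumes "x \<in> Ainf p f" "0 < p" "1 \<le> f"
  shows "aphi p f x \<in> Ainf p f"
  unfolding Ainf_def
proof (intro CollectI conjI allI impI)
  fix e' assume "aphi p f x e' \<noteq> 0"
  then obtain e where "x e \<noteq> 0" "phi_exp p f e = e'" using aphi_nz by blast
  then show "valid_exp p f e'" using valid_phi[OF assms(2,3)] Ainf_valid[OF assms(1)] by blast
next
  fix N :: rat
  have "{e'. aphi p f x e' \<noteq> 0 \<and> e' 0 < N} \<subseteq> phi_exp p f ` {e. x e \<noteq> 0 \<and> e 0 < N / of_nat p}"
  proof
    fix e' assume "e' \<in> {e'. aphi p f x e' \<noteq> 0 \<and> e' 0 < N}"
    then obtain e where "x e \<noteq> 0" "phi_exp p f e = e'" "e' 0 < N" using aphi_nz by blast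
    then show "e' \<in> phi_exp p f ` {e. x e \<noteq> 0 \<and> e 0 < N / of_nat p}"
      using assms(2) by (auto simp: phi_exp_0 field_simps)
  qed
  then show "finite {e'. aphi p f x e' \<noteq> 0 \<and> e' 0 < N}"
    using Ainf_fin[OF assms(1)] finite_subset by blast
qed

lemma aphi_val:
  assumes "\<forall>e. x e \<noteq> 0 \<longrightarrow> r \<le> e 0" "0 < p" "aphi p f x e' \<noteq> 0"
  shows "of_nat p * r \<le> e' 0"
proof -
  obtain e where "x e \<noteq> 0" "phi_exp p f e = e'" using aphi_nz assms(3) by blast
  then show ?thesis using assms(1,2) by (auto simp: phi_exp_0)
qed

lemma aphi_agree:
  assumes "\<forall>e. e 0 < B \<longrightarrow> x e = z e" "0 < p" "e' 0 < of_nat p * B"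
  shows "aphi p f x e' = aphi p f z e'"
proof -
  have "\<And>e. phi_exp p f e = e' \<Longrightarrow> x e = z e"
    using assms by (auto simp: phi_exp_0)
  then have "{e. x e \<noteq> 0 \<and> phi_exp p f e = e'} = {e. z e \<noteq> 0 \<and> phi_exp p f e = e'}" by auto
  then show ?thesis unfolding aphi_def
    by (intro sum.cong) (auto simp: \<open>\<And>e. phi_exp p f e = e' \<Longrightarrow> x e = z e\<close>)
qed

lemma aphin_Ainf: "x \<in> Ainf p f \<Longrightarrow> 0 < p \<Longrightarrow> 1 \<le> f \<Longrightarrow> (aphi p f ^^ n) x \<in> Ainf p f"
  by (induct n) (auto intro: aphi_Ainf)

lemma aphin_lin:
  assumes "x \<in> Ainf p f" "z \<in> Ainf p f" "0 < p" "1 \<le> f"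
  shows "(aphi p f ^^ n) (\<lambda>e. a * x e + b * z e) = (\<lambda>e'. a * (aphi p f ^^ n) x e' + b * (aphi p f ^^ n) z e')"
proof (induct n)
  case 0 then show ?case by simp
next
  case (Suc n) then show ?case
    using aphi_lin[OF aphin_Ainf[OF assms(1,3,4)] aphin_Ainf[OF assms(2,3,4)] assms(3)] by simp
qed

lemma aphin_val:
  assumes "\<forall>e. x e \<noteq> 0 \<longrightarrow> r \<le> e 0" "0 < p"
  shows "\<forall>e. (aphi p f ^^ n) x e \<noteq> 0 \<longrightarrow> of_nat p ^ n * r \<le> e 0"
proof (induct n)
  case 0 then show ?case using assms by simp
next
  case (Suc n) then show ?case
    using aphi_val[OF Suc assms(2)] by (simp add: mult.assoc)
qed

lemma aphin_agree:
  assumes "\<forall>e. e 0 < B \<longrightarrow> x e = z e" "0 < p"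
  shows "\<forall>e. e 0 < of_nat p ^ n * B \<longrightarrow> (aphi p f ^^ n) x e = (aphi p f ^^ n) z e"
proof (induct n)
  case 0 then show ?case using assms by simp
next
  case (Suc n) then show ?case
    using aphi_agree[OF Suc assms(2)] by (simp add: mult.assoc)
qed


definition sh :: "rat \<Rightarrow> ((nat \<Rightarrow> rat) \<Rightarrow> 'a::field) \<Rightarrow> ((nat \<Rightarrow> rat) \<Rightarrow> 'a)" where
  "sh k z = (\<lambda>e. z (\<lambda>i. e i - (if i = 0 then k else 0)))"

lemma amult_T0: "amult (aT0pow k) z = sh k z"
proof
  fix e :: "nat \<Rightarrow> rat"
  define ek where "ek = (\<lambda>i::nat. if i = 0 then k else 0)"
  have S: "{e1. aT0pow k e1 \<noteq> 0 \<and> z (\<lambda>i. e i - e1 i) \<noteq> 0} =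
           (if z (\<lambda>i. e i - ek i) \<noteq> 0 then {ek} else {})"
    by (auto simp: aT0pow_def ek_def)
  show "amult (aT0pow k) z e = sh k z e"
    unfolding amult_def sh_def S by (auto simp: aT0pow_def ek_def)
qed

lemma sh_Ainf:
  assumes "z \<in> Ainf p f" "0 < p" "1 \<le> f" "k \<in> zp_inv p"
  shows "sh k z \<in> Ainf p f"
  unfolding Ainf_def
proof (intro CollectI conjI allI impI)
  fix e assume "sh k z e \<noteq> 0"
  then have v: "valid_exp p f (\<lambda>i. e i - (if i = 0 then k else 0))"
    using Ainf_valid[OF assms(1)] unfolding sh_def by blast
  show "valid_exp p f e" unfolding valid_exp_def
  proof (intro conjI allI impI)
    fix i assume fi: "f \<le> i"
    then have i0: "i \<noteq> 0" using assms(3) by simp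
    from v fi have "(\<lambda>i. e i - (if i = 0 then k else 0)) i = 0" unfolding valid_exp_def by blast
    then show "e i = 0" using i0 by simp
  next
    fix i assume "i < f"
    then have "e i - (if i = 0 then k else 0) \<in> zp_inv p" using v unfolding valid_exp_def by auto
    then show "e i \<in> zp_inv p" using zp_inv_add[OF assms(2) _ assms(4), of "e i - k"] by (cases "i = 0") auto
  qed
next
  fix N :: rat
  have "{e. sh k z e \<noteq> 0 \<and> e 0 < N} \<subseteq> (\<lambda>e' i. e' i + (if i = 0 then k else 0)) ` {e. z e \<noteq> 0 \<and> e 0 < N - k}"
  proof
    fix e assume "e \<in> {e. sh k z e \<noteq> 0 \<and> e 0 < N}"
    then have m: "(\<lambda>i. e i - (if i = 0 then k else 0)) \<in> {e. z e \<noteq> 0 \<and> e 0 < N - k}"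
      by (auto simp: sh_def)
    show "e \<in> (\<lambda>e' i. e' i + (if i = 0 then k else 0)) ` {e. z e \<noteq> 0 \<and> e 0 < N - k}"
      by (rule image_eqI[OF _ m]) (simp add: fun_eq_iff)
  qed
  then show "finite {e. sh k z e \<noteq> 0 \<and> e 0 < N}"
    using Ainf_fin[OF assms(1)] finite_subset by blast
qed

lemma Lop_unf: "Lop p f h c x = (\<lambda>e. c * sh (- of_nat ((p ^ f - 1) * h)) ((aphi p f ^^ f) x) e)"
  unfolding Lop_def asmult_def amult_T0 aphiq_def by simp

lemma Lop_Ainf:
  assumes "x \<in> Ainf p f" "0 < p" "1 \<le> f"
  shows "Lop p f h c x \<in> Ainf p f"
proof -
  have A: "sh (- of_nat ((p ^ f - 1) * h)) ((aphi p f ^^ f) x) \<in> Ainf p f"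
    by (rule sh_Ainf[OF aphin_Ainf[OF assms] assms(2,3)])
       (use zp_inv_neg[OF zp_inv_nat] in blast)
  then show ?thesis unfolding Lop_unf
    using Ainf_supp[OF A A, of "\<lambda>e. c * sh (- of_nat ((p ^ f - 1) * h)) ((aphi p f ^^ f) x) e"] by auto
qed

lemma Lop_lin:
  assumes "x \<in> Ainf p f" "z \<in> Ainf p f" "0 < p" "1 \<le> f"
  shows "Lop p f h c (\<lambda>e. a * x e + b * z e) = (\<lambda>e. a * Lop p f h c x e + b * Lop p f h c z e)"
  unfolding Lop_unf aphin_lin[OF assms] by (simp add: sh_def algebra_simps)

lemma Lop_val:
  assumes "\<forall>e. x e \<noteq> 0 \<longrightarrow> of_nat h + d \<le> e 0" "0 < p"
  shows "\<forall>e. Lop p f h c x e \<noteq> 0 \<longrightarrow> of_nat h + of_nat (p ^ f) * d \<le> e 0"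
proof (intro allI impI)
  fix e assume "Lop p f h c x e \<noteq> 0"
  then have "(aphi p f ^^ f) x (\<lambda>i. e i - (if i = 0 then - of_nat ((p ^ f - 1) * h) else 0)) \<noteq> 0"
    unfolding Lop_unf sh_def by auto
  from aphin_val[OF assms, rule_format, OF this]
  have "of_nat p ^ f * (of_nat h + d) \<le> e 0 + of_nat ((p ^ f - 1) * h)" by simp
  moreover have "p ^ f \<ge> 1" using assms(2) by simp
  ultimately show "of_nat h + of_nat (p ^ f) * d \<le> e 0"
    by (simp add: of_nat_diff algebra_simps)
qed

lemma Lop_agree:
  assumes "\<forall>e. e 0 < B \<longrightarrow> x e = z e" "0 < p"
  shows "\<forall>e. e 0 < of_nat (p ^ f) * B - of_nat ((p ^ f - 1) * h) \<longrightarrow> Lop p f h c x e = Lop p f h c z e"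
proof (intro allI impI)
  fix e :: "nat \<Rightarrow> rat" assume "e 0 < of_nat (p ^ f) * B - of_nat ((p ^ f - 1) * h)"
  then have "(aphi p f ^^ f) x (\<lambda>i. e i - (if i = 0 then - of_nat ((p ^ f - 1) * h) else 0))
     = (aphi p f ^^ f) z (\<lambda>i. e i - (if i = 0 then - of_nat ((p ^ f - 1) * h) else 0))"
    using aphin_agree[OF assms, where n=f and f=f, rule_format,
       of "(\<lambda>i. e i - (if i = 0 then - of_nat ((p ^ f - 1) * h) else 0))"] by simp
  then show "Lop p f h c x e = Lop p f h c z e"
    unfolding Lop_unf sh_def by simp
qed


lemma min_supp:
  assumes "x \<in> Ainf p f" "x e1 \<noteq> 0"
  shows "\<exists>es. x es \<noteq> 0 \<and> (\<forall>e. x e \<noteq> 0 \<longrightarrow> es 0 \<le> e 0)"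
proof -
  define F where "F = {e. x e \<noteq> 0 \<and> e 0 < e1 0 + 1}"
  have fin: "finite F" unfolding F_def by (rule Ainf_fin[OF assms(1)])
  have ne: "e1 \<in> F" unfolding F_def using assms(2) by simp
  define m where "m = Min ((\<lambda>e. e 0) ` F)"
  have "m \<in> (\<lambda>e. e 0) ` F" unfolding m_def using fin ne by (intro Min_in) auto
  then obtain es where es: "es \<in> F" "es 0 = m" by auto
  have le: "\<And>e. e \<in> F \<Longrightarrow> m \<le> e 0" unfolding m_def using fin by (intro Min_le) auto
  have "\<forall>e. x e \<noteq> 0 \<longrightarrow> es 0 \<le> e 0"
  proof (intro allI impI)
    fix e assume "x e \<noteq> 0"
    show "es 0 \<le> e 0"
    proof (cases "e 0 < e1 0 + 1")
      case True then have "e \<in> F" using \<open>x e \<noteq> 0\<close> by (simp add: F_def)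
      then show ?thesis using le es by simp
    next
      case False then show ?thesis using es le[OF ne] by simp
    qed
  qed
  then show ?thesis using es F_def by auto
qed

lemma anorm_bound:
  assumes "1 < p" "\<forall>e. x e \<noteq> 0 \<longrightarrow> r \<le> e 0"
  shows "0 \<le> anorm p x \<and> anorm p x \<le> real p powr (- real_of_rat r)"
proof (cases "x = (\<lambda>e. 0)")
  case True then show ?thesis by (simp add: anorm_def)
next
  case False
  then obtain e1 where e1: "x e1 \<noteq> 0" by auto
  define S where "S = {real p powr (- real_of_rat (e 0)) | e. x e \<noteq> 0}"
  have ub: "\<And>s. s \<in> S \<Longrightarrow> s \<le> real p powr (- real_of_rat r)"
  proof -
    fix s assume "s \<in> S"
    then obtain e where "x e \<noteq> 0" "s = real p powr (- real_of_rat (e 0))" unfolding S_def by auto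
    moreover have "real_of_rat r \<le> real_of_rat (e 0)" using assms(2) \<open>x e \<noteq> 0\<close> of_rat_less_eq by blast
    ultimately show "s \<le> real p powr (- real_of_rat r)" using assms(1) by simp
  qed
  have inS: "real p powr (- real_of_rat (e1 0)) \<in> S" unfolding S_def using e1 by blast
  have "S \<noteq> {}" using inS by blast
  then have 1: "Sup S \<le> real p powr (- real_of_rat r)" using ub by (intro cSup_least) auto
  have 2: "real p powr (- real_of_rat (e1 0)) \<le> Sup S"
    using inS ub by (intro cSup_upper) (auto simp: bdd_above_def)
  have 3: "0 < real p powr (- real_of_rat (e1 0))" using assms(1) by simp
  have "0 \<le> Sup S" using 2 3 by linarith
  with 1 show ?thesis using False unfolding anorm_def S_def by auto
qed

lemma anorm_lt_iff:
  assumes "1 < p" "x \<in> Ainf p f"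
  shows "anorm p x < real p powr (- real h) \<longleftrightarrow> (\<forall>e. x e \<noteq> 0 \<longrightarrow> of_nat h < e 0)"
proof
  assume a: "anorm p x < real p powr (- real h)"
  show "\<forall>e. x e \<noteq> 0 \<longrightarrow> of_nat h < e 0"
  proof (intro allI impI)
    fix e assume e: "x e \<noteq> 0"
    obtain es where es: "x es \<noteq> 0" "\<forall>e. x e \<noteq> 0 \<longrightarrow> es 0 \<le> e 0" using min_supp[OF assms(2) e] by blast
    define S where "S = {real p powr (- real_of_rat (e 0)) | e. x e \<noteq> 0}"
    have ub: "\<And>s. s \<in> S \<Longrightarrow> s \<le> real p powr (- real_of_rat (es 0))"
    proof -
      fix s assume "s \<in> S"
      then obtain e where "x e \<noteq> 0" "s = real p powr (- real_of_rat (e 0))" unfolding S_def by auto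
      moreover have "real_of_rat (es 0) \<le> real_of_rat (e 0)" using es \<open>x e \<noteq> 0\<close> of_rat_less_eq by blast
      ultimately show "s \<le> real p powr (- real_of_rat (es 0))" using assms(1) by simp
    qed
    have inS: "real p powr (- real_of_rat (e 0)) \<in> S" unfolding S_def using e by blast
    have "real p powr (- real_of_rat (e 0)) \<le> Sup S"
      using inS ub by (intro cSup_upper) (auto simp: bdd_above_def)
    moreover have "x \<noteq> (\<lambda>e. 0)" using e by auto
    ultimately have "real p powr (- real_of_rat (e 0)) < real p powr (- real h)"
      using a unfolding anorm_def S_def by auto
    then have "real h < real_of_rat (e 0)" using assms(1) by simp
    then show "of_nat h < e 0"
      by (metis of_rat_less of_rat_of_nat_eq)
  qed
next
  assume a: "\<forall>e. x e \<noteq> 0 \<longrightarrow> of_nat h < e 0"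
  show "anorm p x < real p powr (- real h)"
  proof (cases "x = (\<lambda>e. 0)")
    case True then show ?thesis using assms(1) by (simp add: anorm_def)
  next
    case False
    then obtain e1 where e1: "x e1 \<noteq> 0" by auto
    obtain es where es: "x es \<noteq> 0" "\<forall>e. x e \<noteq> 0 \<longrightarrow> es 0 \<le> e 0" using min_supp[OF assms(2) e1] by blast
    have "anorm p x \<le> real p powr (- real_of_rat (es 0))" using anorm_bound[OF assms(1) es(2)] by simp
    also have "\<dots> < real p powr (- real h)"
    proof -
      have "of_nat h < es 0" using a es(1) by blast
      then have "real h < real_of_rat (es 0)" by (metis of_rat_less of_rat_of_nat_eq)
      then show ?thesis using assms(1) by simp
    qed
    finally show ?thesis .
  qed
qed


lemma Lop_add:
  assumes "x \<in> Ainf p f" "z \<in> Ainf p f" "0 < p" "1 \<le> f"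
  shows "Lop p f h c (\<lambda>e. x e + z e) = (\<lambda>e. Lop p f h c x e + Lop p f h c z e)"
  using Lop_lin[OF assms, where a=1 and b=1 and h=h and c=c] by simp

lemma Lop_sub:
  assumes "x \<in> Ainf p f" "z \<in> Ainf p f" "0 < p" "1 \<le> f"
  shows "Lop p f h c (\<lambda>e. x e - z e) = (\<lambda>e. Lop p f h c x e - Lop p f h c z e)"
  using Lop_lin[OF assms, where a=1 and b="-1" and h=h and c=c] by simp

lemma Lop_zero:
  assumes "0 < p" "1 \<le> f"
  shows "Lop p f h c (\<lambda>e. 0) = (\<lambda>e. (0::'a::field))"
proof -
  have "Lop p f h c (\<lambda>e. 0 * (\<lambda>e. 0::'a) e + 0 * (\<lambda>e. 0) e)
        = (\<lambda>e. 0 * Lop p f h c (\<lambda>e. 0) e + 0 * Lop p f h c (\<lambda>e. 0) e)"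
    by (rule Lop_lin[OF zero_Ainf zero_Ainf assms])
  then show ?thesis by simp
qed

lemma apsum_Suc: "apsum s (Suc N) = (\<lambda>e. apsum s N e + s N e)"
  by (simp add: apsum_def fun_eq_iff)

lemma apsum_Ainf: "(\<And>n. s n \<in> Ainf p f) \<Longrightarrow> apsum s N \<in> Ainf p f"
proof (induct N)
  case 0 then show ?case using zero_Ainf by (simp add: apsum_def)
next
  case (Suc N)
  show ?case unfolding apsum_Suc
    by (rule Ainf_supp[OF Suc(1)[OF Suc(2)] Suc(2)[of N]]) auto
qed

lemma Lop_apsum:
  assumes "\<And>n. s n \<in> Ainf p f" "0 < p" "1 \<le> f"
  shows "Lop p f h c (apsum s N) = apsum (\<lambda>n. Lop p f h c (s n)) N"
proof (induct N)
  case 0 then show ?case using Lop_zero[OF assms(2,3)] by (simp add: apsum_def)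
next
  case (Suc N)
  show ?case unfolding apsum_Suc Lop_add[OF apsum_Ainf[OF assms(1)] assms] Suc by simp
qed

theorem lemma4p6:
  fixes p f h :: nat and l0 l1 :: "'a::field" and y :: "(nat \<Rightarrow> rat) \<Rightarrow> 'a"
  assumes "prime (p::nat)" and "odd p" and "1 \<le> f"
    and "finite (UNIV :: 'a set)" and "of_nat p = (0::'a)"
    and "h \<le> p ^ f - 2"
    and "l0 \<noteq> 0" and "l1 \<noteq> 0"
    and "y \<in> Ainf p f" and "anorm p y < real p powr (- real h)"
  shows "\<exists>x. x \<in> Ainf p f \<and> anorm p x < real p powr (- real h)
             \<and> asub x (Lop p f h (l0 / l1) x) = y
             \<and> (\<forall>x'. x' \<in> Ainf p f \<and> anorm p x' < real p powr (- real h)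
                     \<and> asub x' (Lop p f h (l0 / l1) x') = y \<longrightarrow> x' = x)
             \<and> (\<lambda>N. anorm p (asub x (apsum (\<lambda>n. (Lop p f h (l0 / l1) ^^ n) y) N)))
                 \<longlonglongrightarrow> 0"
proof -
  have p1: "1 < p" using assms(1) prime_gt_1_nat by blast
  have p0: "0 < p" using p1 by simp
  have f1: "1 \<le> f" by fact
  define L where "L = Lop p f h (l0 / l1)"
  define Ln where "Ln n = (L ^^ n) y" for n
  have q2: "2 \<le> p ^ f"
  proof -
    have "p ^ 1 \<le> p ^ f" using p0 f1 by (intro power_increasing) auto
    then show ?thesis using p1 by simp
  qed
  have yv: "\<forall>e. y e \<noteq> 0 \<longrightarrow> of_nat h < e 0" using anorm_lt_iff[OF p1 assms(9)] assms(10) by blast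
  obtain \<delta> :: rat where d0: "0 < \<delta>" and dy: "\<forall>e. y e \<noteq> 0 \<longrightarrow> of_nat h + \<delta> \<le> e 0"
  proof (cases "\<exists>e1. y e1 \<noteq> 0")
    case True then obtain e1 where "y e1 \<noteq> 0" by blast
    from min_supp[OF assms(9) this] obtain es where es: "y es \<noteq> 0" "\<forall>e. y e \<noteq> 0 \<longrightarrow> es 0 \<le> e 0" by blast
    show ?thesis
    proof (rule that[of "es 0 - of_nat h"])
      show "0 < es 0 - of_nat h" using yv es by auto
      show "\<forall>e. y e \<noteq> 0 \<longrightarrow> of_nat h + (es 0 - of_nat h) \<le> e 0" using es by auto
    qed
  next
    case False then show ?thesis by (intro that[of 1]) auto
  qed
  have LnS: "Ln (Suc n) = L (Ln n)" for n by (simp add: Ln_def)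
  have LnA: "Ln n \<in> Ainf p f" for n
    by (induct n) (auto simp: LnS assms(9) L_def intro: Lop_Ainf[OF _ p0 f1], simp add: Ln_def assms(9))
  have Lnv: "\<forall>e. Ln n e \<noteq> 0 \<longrightarrow> of_nat h + of_nat (Suc n) * \<delta> \<le> e 0" for n
  proof (induct n)
    case 0 then show ?case using dy by (simp add: Ln_def)
  next
    case (Suc n)
    have a: "\<forall>e. Ln (Suc n) e \<noteq> 0 \<longrightarrow> of_nat h + of_nat (p ^ f) * (of_nat (Suc n) * \<delta>) \<le> e 0"
      using Lop_val[OF Suc p0, of f "l0 / l1"] by (simp add: LnS L_def)
    have "2 * Suc n \<le> p ^ f * Suc n" using q2 by (rule mult_right_mono) simp
    then have "Suc (Suc n) \<le> p ^ f * Suc n" by simp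
    then have "(of_nat (Suc (Suc n)) :: rat) \<le> of_nat (p ^ f * Suc n)" by (simp only: of_nat_le_iff)
    then have "of_nat (Suc (Suc n)) * \<delta> \<le> of_nat (p ^ f * Suc n) * \<delta>"
      using d0 by (intro mult_right_mono) auto
    then have b: "of_nat (Suc (Suc n)) * \<delta> \<le> of_nat (p ^ f) * (of_nat (Suc n) * \<delta>)"
      by (simp only: of_nat_mult mult.assoc)
    show ?case
    proof (intro allI impI)
      fix e assume "Ln (Suc n) e \<noteq> 0"
      then have "of_nat h + of_nat (p ^ f) * (of_nat (Suc n) * \<delta>) \<le> e 0" using a by blast
      then show "of_nat h + of_nat (Suc (Suc n)) * \<delta> \<le> e 0" using b by linarith
    qed
  qed
  have Lnb: "n < nat \<lceil>(B - of_nat h) / \<delta>\<rceil>" if "Ln n e \<noteq> 0" "e 0 \<le> B" for n e B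
  proof -
    have "of_nat h + of_nat (Suc n) * \<delta> \<le> e 0" using Lnv that(1) by blast
    then have "of_nat n * \<delta> < B - of_nat h" using that(2) d0 by (simp add: algebra_simps)
    then have "of_nat n < (B - of_nat h) / \<delta>" using d0 by (simp add: pos_less_divide_eq)
    also have "\<dots> \<le> of_int \<lceil>(B - of_nat h) / \<delta>\<rceil>" by (rule le_of_int_ceiling)
    finally have "int n < \<lceil>(B - of_nat h) / \<delta>\<rceil>"
      by (metis of_int_less_iff of_int_of_nat_eq)
    then show ?thesis by linarith
  qed
  define M where "M e = nat \<lceil>(e 0 - of_nat h) / \<delta>\<rceil>" for e :: "nat \<Rightarrow> rat"
  have LnM: "Ln n e = 0" if "M e \<le> n" for n e
    using Lnb[of n e "e 0"] that by (force simp: M_def)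
  define x where "x e = (\<Sum>n<M e. Ln n e)" for e
  have xS: "x e = apsum Ln N e" if "M e \<le> N" for e N
    unfolding x_def apsum_def
    by (rule sum.mono_neutral_left) (use that LnM in auto)
  have xnz: "\<exists>n. Ln n e \<noteq> 0" if "x e \<noteq> 0" for e
    using that unfolding x_def by (meson sum.not_neutral_contains_not_neutral)
  have xA: "x \<in> Ainf p f"
    unfolding Ainf_def
  proof (intro CollectI conjI allI impI)
    fix e assume "x e \<noteq> 0"
    then obtain n where "Ln n e \<noteq> 0" using xnz by blast
    then show "valid_exp p f e" using Ainf_valid[OF LnA] by blast
  next
    fix N :: rat
    have "{e. x e \<noteq> 0 \<and> e 0 < N} \<subseteq> (\<Union>n<nat \<lceil>(N - of_nat h) / \<delta>\<rceil>. {e. Ln n e \<noteq> 0 \<and> e 0 < N})"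
    proof
      fix e assume "e \<in> {e. x e \<noteq> 0 \<and> e 0 < N}"
      then have e: "x e \<noteq> 0" "e 0 < N" by auto
      then obtain n where n: "Ln n e \<noteq> 0" using xnz by blast
      then have "n < nat \<lceil>(N - of_nat h) / \<delta>\<rceil>" using Lnb[of n e N] e by simp
      then show "e \<in> (\<Union>n<nat \<lceil>(N - of_nat h) / \<delta>\<rceil>. {e. Ln n e \<noteq> 0 \<and> e 0 < N})" using n e by blast
    qed
    moreover have "finite (\<Union>n<nat \<lceil>(N - of_nat h) / \<delta>\<rceil>. {e. Ln n e \<noteq> 0 \<and> e 0 < N})"
      using Ainf_fin[OF LnA] by blast
    ultimately show "finite {e. x e \<noteq> 0 \<and> e 0 < N}" by (rule finite_subset)
  qed
  have xv: "\<forall>e. x e \<noteq> 0 \<longrightarrow> of_nat h < e 0"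
  proof (intro allI impI)
    fix e assume "x e \<noteq> 0"
    then obtain n where "Ln n e \<noteq> 0" using xnz by blast
    then have "of_nat h + of_nat (Suc n) * \<delta> \<le> e 0" using Lnv by blast
    moreover have "0 < of_nat (Suc n) * \<delta>" using d0 by simp
    ultimately show "of_nat h < e 0" by linarith
  qed
  have xn: "anorm p x < real p powr (- real h)" using anorm_lt_iff[OF p1 xA] xv by blast
  have SA: "apsum Ln N \<in> Ainf p f" for N by (rule apsum_Ainf[OF LnA])
  have LS: "L (apsum Ln N) = apsum (\<lambda>n. Ln (Suc n)) N" for N
    unfolding L_def Lop_apsum[OF LnA p0 f1] by (simp add: LnS L_def)
  have eq: "asub x (L x) = y"
  proof
    fix e :: "nat \<Rightarrow> rat"
    define B where "B = \<bar>e 0\<bar> + of_nat h + 1"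
    define N where "N = max (M e) (nat \<lceil>(B - of_nat h) / \<delta>\<rceil>)"
    have agree: "\<forall>e'. e' 0 < B \<longrightarrow> x e' = apsum Ln N e'"
    proof (intro allI impI)
      fix e' :: "nat \<Rightarrow> rat" assume "e' 0 < B"
      then have "M e' \<le> nat \<lceil>(B - of_nat h) / \<delta>\<rceil>"
        unfolding M_def using d0 by (intro nat_mono ceiling_mono divide_right_mono) auto
      then show "x e' = apsum Ln N e'" by (intro xS) (simp add: N_def)
    qed
    have Q: "(1::rat) \<le> of_nat (p ^ f)"
    proof -
      have "1 \<le> p ^ f" using q2 by simp
      then show ?thesis by (metis of_nat_1 of_nat_le_iff)
    qed
    have "\<bar>e 0\<bar> + 1 \<le> of_nat (p ^ f) * (\<bar>e 0\<bar> + 1)"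
      using mult_right_mono[OF Q, of "\<bar>e 0\<bar> + 1"] by simp
    moreover have "of_nat (p ^ f) * B - of_nat ((p ^ f - 1) * h) = of_nat (p ^ f) * (\<bar>e 0\<bar> + 1) + of_nat h"
      using q2 by (simp add: B_def of_nat_diff algebra_simps)
    ultimately have lt: "e 0 < of_nat (p ^ f) * B - of_nat ((p ^ f - 1) * h)" by linarith
    have "L x e = L (apsum Ln N) e"
      using Lop_agree[OF agree p0, of f h "l0 / l1"] lt by (simp add: L_def)
    then have "asub x (L x) e = apsum Ln N e - apsum (\<lambda>n. Ln (Suc n)) N e"
      using xS[of e N] by (simp add: asub_def LS N_def)
    also have "\<dots> = Ln 0 e - Ln N e"
      unfolding apsum_def using sum_lessThan_telescope'[of "\<lambda>n. Ln n e" N]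
      by (simp add: sum_subtractf)
    also have "\<dots> = y e" using LnM[of e N] by (simp add: N_def Ln_def)
    finally show "asub x (L x) e = y e" .
  qed
  have uniq: "x' = x" if x'A: "x' \<in> Ainf p f" and x'n: "anorm p x' < real p powr (- real h)"
    and x'eq: "asub x' (L x') = y" for x'
  proof -
    define z where "z = (\<lambda>e. x' e - x e)"
    have zA: "z \<in> Ainf p f" unfolding z_def by (rule Ainf_supp[OF x'A xA]) auto
    have Lz: "L z = (\<lambda>e. L x' e - L x e)" unfolding z_def L_def by (rule Lop_sub[OF x'A xA p0 f1])
    have zfix: "L z e = z e" for e
    proof -
      have "L z e = L x' e - L x e" using Lz by simp
      moreover have "x' e - L x' e = y e" "x e - L x e = y e"
        using fun_cong[OF x'eq, of e] fun_cong[OF eq, of e] by (simp_all add: asub_def)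
      ultimately show ?thesis by (simp add: z_def algebra_simps)
    qed
    have x'v: "\<forall>e. x' e \<noteq> 0 \<longrightarrow> of_nat h < e 0" using anorm_lt_iff[OF p1 x'A] x'n by blast
    have zv: "\<forall>e. z e \<noteq> 0 \<longrightarrow> of_nat h < e 0"
      using x'v xv unfolding z_def by (metis diff_self)
    show ?thesis
    proof (rule ccontr)
      assume "x' \<noteq> x"
      then obtain e1 where "x' e1 \<noteq> x e1" by auto
      then have "z e1 \<noteq> 0" by (simp add: z_def)
      from min_supp[OF zA this] obtain es where es: "z es \<noteq> 0" "\<forall>e. z e \<noteq> 0 \<longrightarrow> es 0 \<le> e 0" by blast
      define d where "d = es 0 - of_nat h"
      have dpos: "0 < d" using zv es by (simp add: d_def)
      have zd: "\<forall>e. z e \<noteq> 0 \<longrightarrow> of_nat h + d \<le> e 0" using es by (simp add: d_def)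
      have q2r: "(2::rat) \<le> of_nat (p ^ f)" using q2 by (metis of_nat_le_iff of_nat_numeral)
      from Lop_val[OF zd p0, of f "l0 / l1"]
      have "of_nat h + of_nat (p ^ f) * d \<le> es 0" using zfix[of es] es(1) by (simp add: L_def)
      moreover have "2 * d \<le> of_nat (p ^ f) * d" using q2r dpos
        by (intro mult_right_mono) auto
      moreover have "es 0 = of_nat h + d" by (simp add: d_def)
      ultimately show False using dpos by linarith
    qed
  qed
  define T where "T N = asub x (apsum Ln N)" for N
  have Tv: "\<forall>e. T N e \<noteq> 0 \<longrightarrow> of_nat h + of_nat (Suc N) * \<delta> \<le> e 0" for N
  proof (intro allI impI)
    fix e assume ne: "T N e \<noteq> 0"
    define K where "K = max N (M e)"
    have "x e = apsum Ln K e" by (rule xS) (simp add: K_def)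
    then have "T N e = (\<Sum>n\<in>{0..<K}. Ln n e) - (\<Sum>n\<in>{0..<N}. Ln n e)"
      by (simp add: T_def asub_def apsum_def atLeast0LessThan)
    also have "\<dots> = (\<Sum>n\<in>{N..<K}. Ln n e)"
      by (rule sum_diff_nat_ivl) (auto simp: K_def)
    finally have "(\<Sum>n\<in>{N..<K}. Ln n e) \<noteq> 0" using ne by simp
    then obtain n where n: "n \<in> {N..<K}" "Ln n e \<noteq> 0" by (meson sum.not_neutral_contains_not_neutral)
    then have "of_nat h + of_nat (Suc n) * \<delta> \<le> e 0" using Lnv by blast
    moreover have "of_nat (Suc N) * \<delta> \<le> of_nat (Suc n) * \<delta>" using n(1) d0
      by (intro mult_right_mono) auto
    ultimately show "of_nat h + of_nat (Suc N) * \<delta> \<le> e 0" by linarith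
  qed
  define dr where "dr = real_of_rat \<delta>"
  have dr0: "0 < dr" using d0 by (simp add: dr_def)
  define r where "r = real p powr (- dr)"
  have r0: "0 < r" using p0 by (simp add: r_def)
  have r1: "r < 1" unfolding r_def using p1 dr0 by (intro powr_less_one) auto
  have geq: "real p powr (- real_of_rat (of_nat h + of_nat (Suc N) * \<delta>)) = real p powr (- real h) * r ^ Suc N" for N
  proof -
    have 1: "r ^ Suc N = r powr real (Suc N)" using powr_realpow[OF r0, of "Suc N"] by simp
    have 2: "r powr real (Suc N) = real p powr (- dr * real (Suc N))" unfolding r_def by (simp add: powr_powr)
    have 3: "real p powr (- real h) * real p powr (- dr * real (Suc N)) = real p powr (- real h + - dr * real (Suc N))"
      by (rule powr_add[symmetric])
    have 4: "- real h + - dr * real (Suc N) = - real_of_rat (of_nat h + of_nat (Suc N) * \<delta>)"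
      by (simp add: dr_def of_rat_add of_rat_mult algebra_simps)
    show ?thesis unfolding 1 2 3 4 by simp
  qed
  have lim: "(\<lambda>N. real p powr (- real h) * r ^ Suc N) \<longlonglongrightarrow> 0"
  proof -
    have "(\<lambda>N. r ^ N) \<longlonglongrightarrow> 0" using r0 r1 by (intro LIMSEQ_power_zero) simp
    then have "(\<lambda>N. r ^ Suc N) \<longlonglongrightarrow> 0" by (rule LIMSEQ_Suc)
    then show ?thesis by (rule tendsto_mult_right_zero)
  qed
  have conv: "(\<lambda>N. anorm p (T N)) \<longlonglongrightarrow> 0"
  proof (rule tendsto_sandwich[of "\<lambda>N. 0" _ _ "\<lambda>N. real p powr (- real h) * r ^ Suc N"])
    show "\<forall>\<^sub>F N in sequentially. 0 \<le> anorm p (T N)"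
      using anorm_bound[OF p1 Tv] by simp
    show "\<forall>\<^sub>F N in sequentially. anorm p (T N) \<le> real p powr (- real h) * r ^ Suc N"
      using anorm_bound[OF p1 Tv] geq by simp
    show "(\<lambda>N. 0::real) \<longlonglongrightarrow> 0" by simp
    show "(\<lambda>N. real p powr (- real h) * r ^ Suc N) \<longlonglongrightarrow> 0" by (rule lim)
  qed
  show ?thesis
    apply (rule exI[of _ x])
    using xA xn eq uniq conv unfolding T_def L_def Ln_def by blast
qed

end
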